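(* For every graph $G=(V,E)$, the star inequalities $$x(W)+(|W|-1)x_w\le |W|\qquad\text{for all } w\in V \text{ and } W\subseteq N(w)$$ are valid for $\mathcal{P}(G)$. Moreover, if $G$ is a tree, each of these inequalities defines a facet of $\mathcal{P}(G)$.
   Context: All graphs are simple and connected; a tree is a connected graph with no cycle. $N(w)$ is the neighborhood of $w$, $x(A)=\sum_{a\in A}x_a$. A co-2-plex is a vertex set inducing a subgraph of maximum degree at most 1. $\mathcal{P}(G)=\mathrm{conv}\{\chi^S : S\text{ co-2-plex of } G\}\subseteq\mathbb{R}^V$. *)

theory Defs
  imports "HOL-Analysis.Analysis"
begin

definition simple_graph :: "('n \<Rightarrow> 'n \<Rightarrow> bool) \<Rightarrow> bool" where
  "simple_graph E \<longleftrightarrow> (\<forall>u v. E u v \<longrightarrow> E v u) \<and> (\<forall>v. \<not> E v v)"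

definition connected_graph :: "('n \<Rightarrow> 'n \<Rightarrow> bool) \<Rightarrow> bool" where
  "connected_graph E \<longleftrightarrow> (\<forall>u v. E\<^sup>*\<^sup>* u v)"

definition is_cycle :: "('n \<Rightarrow> 'n \<Rightarrow> bool) \<Rightarrow> 'n list \<Rightarrow> bool" where
  "is_cycle E cs \<longleftrightarrow> length cs \<ge> 3 \<and> distinct cs
     \<and> (\<forall>i. Suc i < length cs \<longrightarrow> E (cs ! i) (cs ! Suc i))
     \<and> E (last cs) (hd cs)"

definition is_tree :: "('n \<Rightarrow> 'n \<Rightarrow> bool) \<Rightarrow> bool" where
  "is_tree E \<longleftrightarrow> simple_graph E \<and> connected_graph E \<and> (\<nexists>cs. is_cycle E cs)"

definition neighbors :: "('n \<Rightarrow> 'n \<Rightarrow> bool) \<Rightarrow> 'n \<Rightarrow> 'n set" where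
  "neighbors E w = {v. E w v}"

definition co_2_plex :: "('n::finite \<Rightarrow> 'n \<Rightarrow> bool) \<Rightarrow> 'n set \<Rightarrow> bool" where
  "co_2_plex E S \<longleftrightarrow> (\<forall>v\<in>S. card (neighbors E v \<inter> S) \<le> 1)"

definition char_vec :: "'n::finite set \<Rightarrow> real ^ 'n" where
  "char_vec S = (\<chi> i. if i \<in> S then 1 else 0)"

definition co2plex_polytope :: "('n::finite \<Rightarrow> 'n \<Rightarrow> bool) \<Rightarrow> (real ^ 'n) set" where
  "co2plex_polytope E = convex hull {char_vec S | S. co_2_plex E S}"

definition star_lhs :: "'n::finite \<Rightarrow> 'n set \<Rightarrow> real ^ 'n \<Rightarrow> real" where
  "star_lhs w W x = (\<Sum>a\<in>W. x $ a) + (real (card W) - 1) * x $ w"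

end

theory Submission
  imports Defs
begin

definition cvec :: "'n::finite \<Rightarrow> 'n set \<Rightarrow> real ^ 'n" where
  "cvec w W = (\<chi> i. (if i \<in> W then 1 else 0) + (if i = w then real (card W) - 1 else 0))"

lemma star_inner: "star_lhs w W x = cvec w W \<bullet> x"
proof -
  have "cvec w W \<bullet> x = (\<Sum>i\<in>UNIV. (if i \<in> W then x $ i else 0) + (if i = w then (real (card W) - 1) * x $ i else 0))"
    unfolding cvec_def inner_vec_def by (intro sum.cong) (auto simp: algebra_simps)
  also have "\<dots> = (\<Sum>i\<in>UNIV. (if i \<in> W then x $ i else 0)) + (real (card W) - 1) * x $ w"
    by (simp add: sum.distrib)
  also have "(\<Sum>i\<in>UNIV. (if i \<in> W then x $ i else 0)) = (\<Sum>i\<in>W. x $ i)"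
    by (simp add: sum.If_cases)
  finally show ?thesis unfolding star_lhs_def by simp
qed

lemma star_char: "star_lhs w W (char_vec S) = real (card (W \<inter> S)) + (real (card W) - 1) * (if w \<in> S then 1 else 0)"
  unfolding star_lhs_def char_vec_def
  by (simp add: sum.If_cases Int_commute)

lemma co2_small:
  assumes "simple_graph E" "card S \<le> 2"
  shows "co_2_plex E S"
  unfolding co_2_plex_def
proof
  fix v assume v: "v \<in> S"
  have fin: "finite S" by simp
  have "neighbors E v \<inter> S \<subseteq> S - {v}" using assms(1) by (auto simp: neighbors_def simple_graph_def)
  hence "card (neighbors E v \<inter> S) \<le> card (S - {v})" by (intro card_mono) auto
  also have "\<dots> = card S - 1" using v by simp
  finally show "card (neighbors E v \<inter> S) \<le> 1" using assms(2) by linarith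
qed

lemma tree_no_tri:
  assumes "is_tree E" "E w a" "E w b"
  shows "\<not> E a b"
proof
  assume ab: "E a b"
  have sg: "simple_graph E" using assms by (simp add: is_tree_def)
  have sym: "\<And>x y. E x y \<Longrightarrow> E y x" and irr: "\<And>x. \<not> E x x"
    using sg unfolding simple_graph_def by blast+
  have d: "w \<noteq> a" "w \<noteq> b" "a \<noteq> b" using assms ab irr by metis+
  have e: "\<forall>i. Suc i < length [w,a,b] \<longrightarrow> E ([w,a,b] ! i) ([w,a,b] ! Suc i)"
  proof (intro allI impI)
    fix i assume "Suc i < length [w,a,b]"
    hence "i = 0 \<or> i = 1" by auto
    thus "E ([w,a,b] ! i) ([w,a,b] ! Suc i)" using assms ab by auto
  qed
  have "is_cycle E [w,a,b]"
    unfolding is_cycle_def using d e sym[OF assms(3)] by simp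
  thus False using assms(1) by (auto simp: is_tree_def)
qed

lemma tree_no_sq:
  assumes "is_tree E" "E w a" "E w b" "a \<noteq> b" "E u a" "E u b"
  shows "u = w"
proof (rule ccontr)
  assume uw: "u \<noteq> w"
  have sg: "simple_graph E" using assms by (simp add: is_tree_def)
  have sym: "\<And>x y. E x y \<Longrightarrow> E y x" and irr: "\<And>x. \<not> E x x"
    using sg unfolding simple_graph_def by blast+
  have d: "u \<noteq> a" "u \<noteq> b" "a \<noteq> w" "b \<noteq> w" using assms irr by metis+
  have e: "\<forall>i. Suc i < length [u,a,w,b] \<longrightarrow> E ([u,a,w,b] ! i) ([u,a,w,b] ! Suc i)"
  proof (intro allI impI)
    fix i assume "Suc i < length [u,a,w,b]"
    hence "i = 0 \<or> i = 1 \<or> i = 2" by auto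
    thus "E ([u,a,w,b] ! i) ([u,a,w,b] ! Suc i)" using assms sym[OF assms(2)] by auto
  qed
  have "is_cycle E [u,a,w,b]"
    unfolding is_cycle_def using d e uw assms(4) sym[OF assms(6)] by simp
  thus False using assms(1) by (auto simp: is_tree_def)
qed

theorem mainTheorem7:
  fixes E :: "'n::finite \<Rightarrow> 'n \<Rightarrow> bool"
  assumes "simple_graph E" and "connected_graph E"
  shows "(\<forall>w W. W \<subseteq> neighbors E w \<longrightarrow>
            (\<forall>x\<in>co2plex_polytope E. star_lhs w W x \<le> real (card W)))
       \<and> (is_tree E \<longrightarrow>
            (\<forall>w W. W \<subseteq> neighbors E w \<longrightarrow>
              {x\<in>co2plex_polytope E. star_lhs w W x = real (card W)}
                facet_of co2plex_polytope E))"
proof -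
  have sg: "simple_graph E" using assms(1) .
  define P where "P = co2plex_polytope E"
  have gen_in: "char_vec S \<in> P" if "co_2_plex E S" for S
    unfolding P_def co2plex_polytope_def by (rule hull_inc) (use that in blast)
  have valid: "star_lhs w W x \<le> real (card W)" if W: "W \<subseteq> neighbors E w" and x: "x \<in> P" for w W x
  proof -
    have "P \<subseteq> {x. cvec w W \<bullet> x \<le> real (card W)}"
      unfolding P_def co2plex_polytope_def
    proof (rule hull_minimal)
      show "convex {x. cvec w W \<bullet> x \<le> real (card W)}" by (rule convex_halfspace_le)
      show "{char_vec S |S. co_2_plex E S} \<subseteq> {x. cvec w W \<bullet> x \<le> real (card W)}"
      proof safe
        fix S assume S: "co_2_plex E S"
        show "cvec w W \<bullet> char_vec S \<le> real (card W)"
        proof (cases "w \<in> S")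
          case True
          have "W \<inter> S \<subseteq> neighbors E w \<inter> S" using W by auto
          hence "card (W \<inter> S) \<le> card (neighbors E w \<inter> S)" by (intro card_mono) auto
          also have "\<dots> \<le> 1" using S True unfolding co_2_plex_def by auto
          finally have "real (card (W \<inter> S)) \<le> 1" by simp
          thus ?thesis using True by (simp add: star_inner[symmetric] star_char)
        next
          case False
          have "card (W \<inter> S) \<le> card W" by (intro card_mono) auto
          thus ?thesis using False by (simp add: star_inner[symmetric] star_char)
        qed
      qed
    qed
    thus ?thesis using x by (auto simp: star_inner)
  qed
  have zeroP: "0 \<in> P"
  proof -
    have "char_vec {} \<in> P" by (rule gen_in) (simp add: co_2_plex_def)
    moreover have "char_vec {} = (0 :: real ^ 'n)" by (simp add: char_vec_def vec_eq_iff)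
    ultimately show ?thesis by simp
  qed
  have axisP: "axis i (1::real) \<in> P" for i
  proof -
    have "char_vec {i} \<in> P" by (rule gen_in, rule co2_small[OF sg]) simp
    moreover have "char_vec {i} = axis i (1::real)" by (simp add: char_vec_def axis_def vec_eq_iff)
    ultimately show ?thesis by simp
  qed
  have BP: "(Basis :: (real ^ 'n) set) \<subseteq> P"
    using axisP by (auto simp: Basis_vec_def)
  have affP: "aff_dim P = int DIM(real ^ 'n)"
  proof -
    have "aff_dim P = int (dim ((+) (- 0) ` P))"
      by (rule aff_dim_eq_dim) (rule hull_inc[OF zeroP])
    also have "(+) (- 0) ` P = P" by simp
    finally have "aff_dim P = int (dim P)" .
    moreover have "card (Basis :: (real ^ 'n) set) \<le> dim P"
      by (rule independent_card_le_dim[OF BP independent_Basis])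
    ultimately show ?thesis using aff_dim_le_DIM[of P] by simp
  qed
  have convP: "convex P" unfolding P_def co2plex_polytope_def by (rule convex_convex_hull)
  have facet: "{x\<in>P. star_lhs w W x = real (card W)} facet_of P"
    if tr: "is_tree E" and W: "W \<subseteq> neighbors E w" for w W
  proof -
    define c where "c = cvec w W"
    define k where "k = card W"
    define F where "F = {x\<in>P. star_lhs w W x = real k}"
    have wW: "w \<notin> W" using W sg by (auto simp: neighbors_def simple_graph_def)
    have Ew: "E w a" if "a \<in> W" for a using W that by (auto simp: neighbors_def)
    have Wind: "\<not> E a b" if "a \<in> W" "b \<in> W" for a b
      using tree_no_tri[OF tr Ew[OF that(1)] Ew[OF that(2)]] .
    have F_eq: "F = P \<inter> {x. c \<bullet> x = real k}" by (auto simp: F_def star_inner c_def)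
    have face: "F face_of P" unfolding F_eq
      by (rule face_of_Int_supporting_hyperplane_le[OF convP]) (use valid[OF W] in \<open>auto simp: c_def k_def star_inner\<close>)
    have pW: "char_vec W \<in> F"
    proof -
      have "co_2_plex E W" unfolding co_2_plex_def
      proof
        fix v assume "v \<in> W"
        hence "neighbors E v \<inter> W = {}" using Wind by (auto simp: neighbors_def)
        thus "card (neighbors E v \<inter> W) \<le> 1" by simp
      qed
      thus ?thesis using gen_in wW by (simp add: F_def star_char k_def)
    qed
    have pU: "char_vec (insert u W) \<in> F" if u: "u \<notin> W" "u \<noteq> w" for u
    proof -
      have "co_2_plex E (insert u W)" unfolding co_2_plex_def
      proof
        fix v assume v: "v \<in> insert u W"
        show "card (neighbors E v \<inter> insert u W) \<le> 1"
        proof (cases "v = u")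
          case True
          have "\<forall>a1\<in>neighbors E v \<inter> insert u W. \<forall>a2\<in>neighbors E v \<inter> insert u W. a1 = a2"
          proof (intro ballI)
            fix a1 a2 assume a: "a1 \<in> neighbors E v \<inter> insert u W" "a2 \<in> neighbors E v \<inter> insert u W"
            have nl: "\<not> E u u" using sg by (simp add: simple_graph_def)
            have a1: "a1 \<in> W" "E u a1" and a2: "a2 \<in> W" "E u a2" using a True nl by (auto simp: neighbors_def)
            show "a1 = a2"
            proof (rule ccontr)
              assume "a1 \<noteq> a2"
              from tree_no_sq[OF tr Ew[OF a1(1)] Ew[OF a2(1)] this a1(2) a2(2)] u show False by simp
            qed
          qed
          thus ?thesis by (simp add: card_le_Suc0_iff_eq)
        next
          case False
          hence vW: "v \<in> W" using v by simp
          have "neighbors E v \<inter> insert u W \<subseteq> {u}" using Wind[OF vW] by (auto simp: neighbors_def)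
          hence "card (neighbors E v \<inter> insert u W) \<le> card {u}" by (intro card_mono) auto
          thus ?thesis by simp
        qed
      qed
      moreover have "W \<inter> insert u W = W" by auto
      ultimately show ?thesis using gen_in u wW by (simp add: F_def star_char k_def)
    qed
    have pA: "char_vec {w, a} \<in> F" if a: "a \<in> W" for a
    proof -
      have "card {w, a} \<le> 2" by (rule order_trans[OF card_insert_le_m1]) auto
      hence "co_2_plex E {w, a}" by (rule co2_small[OF sg])
      moreover have "W \<inter> {w, a} = {a}" using a wW by auto
      ultimately show ?thesis using gen_in by (simp add: F_def star_char k_def)
    qed
    have cne: "c \<noteq> 0"
    proof (cases "W = {}")
      case True
      have "c $ w = -1" by (simp add: c_def cvec_def True)
      thus ?thesis by auto
    next
      case False
      then obtain a where a: "a \<in> W" by auto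
      have "c $ a = 1" using a wW by (auto simp: c_def cvec_def)
      thus ?thesis by auto
    qed
    have up: "aff_dim F \<le> int DIM(real ^ 'n) - 1"
    proof -
      have "aff_dim F \<le> aff_dim {x. c \<bullet> x = real k}" by (rule aff_dim_subset) (auto simp: F_eq)
      thus ?thesis using cne by simp
    qed
    define T where "T = (+) (- char_vec W) ` F"
    have affF: "aff_dim F = int (dim T)"
      unfolding T_def by (rule aff_dim_eq_dim) (rule hull_inc[OF pW])
    define d where "d a = char_vec {w, a} - char_vec W" for a
    define D where "D = (\<lambda>u. axis u (1::real)) ` (UNIV - insert w W) \<union> d ` W"
    have DT: "D \<subseteq> T"
    proof
      fix z assume "z \<in> D"
      then consider u where "u \<notin> insert w W" "z = axis u 1" | a where "a \<in> W" "z = d a"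
        unfolding D_def by auto
      thus "z \<in> T"
      proof cases
        case 1
        have "z = - char_vec W + char_vec (insert u W)"
          using 1 by (auto simp: char_vec_def axis_def vec_eq_iff)
        thus ?thesis using pU[of u] 1 unfolding T_def by auto
      next
        case 2
        have "z = - char_vec W + char_vec {w, a}" using 2 by (simp add: d_def)
        thus ?thesis using pA[OF 2(1)] unfolding T_def by auto
      qed
    qed
    have H0: "{y. c \<bullet> y = 0} \<subseteq> span D"
    proof
      fix y :: "real ^ 'n" assume "y \<in> {y. c \<bullet> y = 0}"
      hence cy: "(\<Sum>a\<in>W. y $ a) + (real k - 1) * y $ w = 0"
        by (simp add: c_def k_def star_inner[symmetric] star_lhs_def)
      have sumW: "(\<Sum>a\<in>W. y $ a + y $ w) = y $ w"
      proof -
        have "(\<Sum>a\<in>W. y $ a + y $ w) = (\<Sum>a\<in>W. y $ a) + real k * y $ w"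
          by (simp add: sum.distrib k_def)
        thus ?thesis using cy by (simp add: algebra_simps)
      qed
      define U where "U = UNIV - insert w W"
      have yeq: "y = (\<Sum>u\<in>U. y $ u *\<^sub>R axis u 1) + (\<Sum>a\<in>W. (y $ a + y $ w) *\<^sub>R d a)"
      proof (subst vec_eq_iff, intro allI)
        fix i
        have s1: "(\<Sum>u\<in>U. y $ u *\<^sub>R axis u (1::real)) $ i = (if i \<in> U then y $ i else 0)"
          by (simp add: axis_def if_distrib sum.delta cong: if_cong)
        show "y $ i = ((\<Sum>u\<in>U. y $ u *\<^sub>R axis u 1) + (\<Sum>a\<in>W. (y $ a + y $ w) *\<^sub>R d a)) $ i"
        proof -
          consider "i \<in> U" | "i = w" | "i \<in> W" unfolding U_def by auto
          thus ?thesis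
          proof cases
            case 1
            have "(\<Sum>a\<in>W. (y $ a + y $ w) *\<^sub>R d a) $ i = 0"
              using 1 by (auto simp: U_def d_def char_vec_def intro!: sum.neutral)
            thus ?thesis using 1 s1 by simp
          next
            case 2
            have "(\<Sum>a\<in>W. (y $ a + y $ w) *\<^sub>R d a) $ i = (\<Sum>a\<in>W. y $ a + y $ w)"
              using 2 wW by (auto simp: d_def char_vec_def intro!: sum.cong)
            thus ?thesis using 2 s1 sumW by (simp add: U_def)
          next
            case 3
            have "(\<Sum>a\<in>W. (y $ a + y $ w) *\<^sub>R d a) $ i
                = (\<Sum>a\<in>W. (if a = i then y $ a + y $ w else 0) - (y $ a + y $ w))"
              using 3 wW by (auto simp: d_def char_vec_def intro!: sum.cong)
            also have "\<dots> = (y $ i + y $ w) - y $ w"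
              using 3 by (simp add: sum_subtractf sum.delta sumW)
            finally show ?thesis using 3 s1 by (simp add: U_def)
          qed
        qed
      qed
      have "(\<Sum>u\<in>U. y $ u *\<^sub>R axis u 1) \<in> span D"
        by (intro span_sum span_scale span_base) (auto simp: D_def U_def)
      moreover have "(\<Sum>a\<in>W. (y $ a + y $ w) *\<^sub>R d a) \<in> span D"
        by (intro span_sum span_scale span_base) (auto simp: D_def)
      ultimately show "y \<in> span D" by (subst yeq) (rule span_add)
    qed
    have "DIM(real ^ 'n) - 1 = dim {y. c \<bullet> y = 0}" using dim_hyperplane[OF cne] by simp
    also have "\<dots> \<le> dim (span D)" by (rule dim_subset[OF H0])
    also have "\<dots> = dim D" by simp
    also have "\<dots> \<le> dim T" by (rule dim_subset[OF DT])
    finally have low: "DIM(real ^ 'n) - 1 \<le> dim T" .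
    have DIMpos: "DIM(real ^ 'n) \<ge> 1" by (simp add: DIM_positive Suc_leI)
    have "aff_dim F = aff_dim P - 1"
      using up low affF affP DIMpos by linarith
    moreover have "F \<noteq> {}" using pW by auto
    ultimately show ?thesis using face by (simp add: facet_of_def F_def k_def)
  qed
  show ?thesis
    using valid facet unfolding P_def by blast
qed

end
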